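(* Let $\mu$ be a non-atomic probability distribution on $[0,1]$ and $r:[0,1]\to\mathbb{R}$ a right-continuous function of bounded variation. Define $b^{(0)}=0$ and, for $k\ge1$, $$u^{(k)}=\arg\min_{u\in\mathcal{C}^+}\|r-b^{(k-1)}-u\|,\qquad b^{(k)}=\arg\min_{b\in\mathcal{C}^-}\|r-u^{(k)}-b\|,\qquad r^{(k)}=u^{(k)}+b^{(k)}.$$ Then $\lim_{k\to\infty}\|r^{(k)}-r\|=0$.
   Context: $\|g\|^2=\int_{[0,1]}g(x)^2\mu(dx)$ is the norm of $L_2(\mu)$; $\mathcal{C}^+$ is the closed convex cone of non-decreasing functions in $L_2(\mu)$ and $\mathcal{C}^-=-\mathcal{C}^+$ the cone of non-increasing functions; the minimizers are the (unique) metric projections onto these cones. *)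

theory Defs
  imports "HOL-Probability.Probability"
begin

definition bounded_variation_on :: "(real \<Rightarrow> real) \<Rightarrow> real \<Rightarrow> real \<Rightarrow> bool" where
  "bounded_variation_on f a b \<longleftrightarrow>
     (\<exists>B. \<forall>(n::nat) (t::nat \<Rightarrow> real).
        (\<forall>i\<le>n. t i \<in> {a..b}) \<and> (\<forall>i<n. t i \<le> t (Suc i)) \<longrightarrow>
        (\<Sum>i<n. \<bar>f (t (Suc i)) - f (t i)\<bar>) \<le> B)"

definition L2 :: "real measure \<Rightarrow> (real \<Rightarrow> real) \<Rightarrow> bool" where
  "L2 M g \<longleftrightarrow> g \<in> borel_measurable M \<and> integrable M (\<lambda>x. (g x)\<^sup>2)"

definition L2norm :: "real measure \<Rightarrow> (real \<Rightarrow> real) \<Rightarrow> real" where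
  "L2norm M g = sqrt (\<integral>x. (g x)\<^sup>2 \<partial>M)"

definition Cplus :: "real measure \<Rightarrow> (real \<Rightarrow> real) set" where
  "Cplus M = {u. L2 M u \<and> (\<exists>v. mono_on {0..1} v \<and> (AE x in M. u x = v x))}"

definition Cminus :: "real measure \<Rightarrow> (real \<Rightarrow> real) set" where
  "Cminus M = {b. (\<lambda>x. - b x) \<in> Cplus M}"

end

theory Submission
  imports Defs
begin


lemma L2_prod:
  assumes "L2 M f" "L2 M g"
  shows "integrable M (\<lambda>x. f x * g x)"
proof (rule Bochner_Integration.integrable_bound[where f="\<lambda>x. (f x)\<^sup>2 + (g x)\<^sup>2"])
  show "integrable M (\<lambda>x. (f x)\<^sup>2 + (g x)\<^sup>2)" using assms unfolding L2_def by auto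
  show "(\<lambda>x. f x * g x) \<in> borel_measurable M" using assms unfolding L2_def by auto
  show "AE x in M. norm (f x * g x) \<le> norm ((f x)\<^sup>2 + (g x)\<^sup>2)"
  proof (intro AE_I2)
    fix x
    have h0: "0 \<le> (\<bar>f x\<bar> - \<bar>g x\<bar>)^2" by simp
    have h1: "(\<bar>f x\<bar> - \<bar>g x\<bar>)^2 = (f x)\<^sup>2 + (g x)\<^sup>2 - 2*(\<bar>f x\<bar>*\<bar>g x\<bar>)"
      by (simp add: power2_diff)
    have h2: "0 \<le> \<bar>f x\<bar>*\<bar>g x\<bar>" by simp
    have "\<bar>f x * g x\<bar> \<le> (f x)\<^sup>2 + (g x)\<^sup>2"
      using h0 h1 h2 unfolding abs_mult by linarith
    thus "norm (f x * g x) \<le> norm ((f x)\<^sup>2 + (g x)\<^sup>2)" by simp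
  qed
qed

lemma L2_lin:
  assumes "L2 M f" "L2 M g"
  shows "L2 M (\<lambda>x. a * f x + c * g x)"
proof -
  have i: "integrable M (\<lambda>x. f x * g x)" by (rule L2_prod[OF assms])
  have "integrable M (\<lambda>x. a\<^sup>2 * (f x)\<^sup>2 + (2*a*c) * (f x * g x) + c\<^sup>2 * (g x)\<^sup>2)"
    using assms i unfolding L2_def by auto
  moreover have "(\<lambda>x. a\<^sup>2 * (f x)\<^sup>2 + (2*a*c) * (f x * g x) + c\<^sup>2 * (g x)\<^sup>2) = (\<lambda>x. (a * f x + c * g x)\<^sup>2)"
    by (rule ext) (simp add: power2_eq_square algebra_simps)
  ultimately show ?thesis using assms unfolding L2_def by auto
qed

lemma L2_diff:
  assumes "L2 M f" "L2 M g"
  shows "L2 M (\<lambda>x. f x - g x)"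
  using L2_lin[OF assms, of 1 "-1"] by simp

lemma L2_neg:
  assumes "L2 M f"
  shows "L2 M (\<lambda>x. - f x)"
  using L2_lin[OF assms assms, of "-1" 0] by simp

lemma L2_cong:
  assumes "\<And>x. x \<in> space M \<Longrightarrow> f x = g x" "L2 M f"
  shows "L2 M g"
proof -
  have "g \<in> borel_measurable M" using assms measurable_cong unfolding L2_def by metis
  moreover have "integrable M (\<lambda>x. (g x)\<^sup>2)"
    using assms(2) Bochner_Integration.integrable_cong[OF refl, of M "\<lambda>x. (f x)\<^sup>2" "\<lambda>x. (g x)\<^sup>2"] assms(1)
    unfolding L2_def by auto
  ultimately show ?thesis unfolding L2_def by auto
qed

lemma N_expand:
  assumes "L2 M f" "L2 M g"
  shows "(\<integral>y. (f y - t * g y)\<^sup>2 \<partial>M) = (\<integral>y. (f y)\<^sup>2 \<partial>M) - 2*t*(\<integral>y. f y * g y \<partial>M) + t\<^sup>2 * (\<integral>y. (g y)\<^sup>2 \<partial>M)"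
proof -
  have i: "integrable M (\<lambda>x. f x * g x)" by (rule L2_prod[OF assms])
  have "(\<integral>y. (f y - t * g y)\<^sup>2 \<partial>M) = (\<integral>y. (f y)\<^sup>2 - (2*t) * (f y * g y) + t\<^sup>2 * (g y)\<^sup>2 \<partial>M)"
    by (rule Bochner_Integration.integral_cong) (auto simp: power2_eq_square algebra_simps)
  also have "\<dots> = (\<integral>y. (f y)\<^sup>2 \<partial>M) - 2*t*(\<integral>y. f y * g y \<partial>M) + t\<^sup>2 * (\<integral>y. (g y)\<^sup>2 \<partial>M)"
    using assms i unfolding L2_def by simp
  finally show ?thesis .
qed

lemma proj_ineq:
  assumes CL2: "\<And>f. f \<in> C \<Longrightarrow> L2 M f"
  and conv: "\<And>f g t. f \<in> C \<Longrightarrow> g \<in> C \<Longrightarrow> 0 \<le> t \<Longrightarrow> t \<le> 1 \<Longrightarrow> (\<lambda>y. f y + t*(g y - f y)) \<in> C"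
  and x: "L2 M x" and p: "p \<in> C" and z: "z \<in> C"
  and min: "\<forall>c\<in>C. L2norm M (\<lambda>y. x y - p y) \<le> L2norm M (\<lambda>y. x y - c y)"
  shows "(\<integral>y. (p y - z y)\<^sup>2 \<partial>M) + (\<integral>y. (x y - p y)\<^sup>2 \<partial>M) \<le> (\<integral>y. (x y - z y)\<^sup>2 \<partial>M)"
proof -
  define a where "a = (\<lambda>y. x y - p y)"
  define d where "d = (\<lambda>y. z y - p y)"
  have La: "L2 M a" unfolding a_def using L2_diff[OF x CL2[OF p]] .
  have Ld: "L2 M d" unfolding d_def using L2_diff[OF CL2[OF z] CL2[OF p]] .
  define I where "I = (\<integral>y. a y * d y \<partial>M)"
  define Na where "Na = (\<integral>y. (a y)\<^sup>2 \<partial>M)"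
  define Nd where "Nd = (\<integral>y. (d y)\<^sup>2 \<partial>M)"
  have Nd0: "0 \<le> Nd" unfolding Nd_def by simp
  have Na0: "0 \<le> Na" unfolding Na_def by simp
  have key: "2*t*I \<le> t\<^sup>2 * Nd" if t: "0 < t" "t \<le> 1" for t
  proof -
    have c: "(\<lambda>y. p y + t*(z y - p y)) \<in> C" using conv[OF p z] t by auto
    have "L2norm M a \<le> L2norm M (\<lambda>y. x y - (p y + t*(z y - p y)))"
      using bspec[OF min c] unfolding a_def by simp
    also have "(\<lambda>y. x y - (p y + t*(z y - p y))) = (\<lambda>y. a y - t * d y)"
      unfolding a_def d_def by (rule ext) (simp add: algebra_simps)
    finally have "sqrt Na \<le> sqrt (\<integral>y. (a y - t * d y)\<^sup>2 \<partial>M)"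
      unfolding L2norm_def Na_def .
    hence "Na \<le> (\<integral>y. (a y - t * d y)\<^sup>2 \<partial>M)" by simp
    also have "\<dots> = Na - 2*t*I + t\<^sup>2 * Nd"
      unfolding Na_def I_def Nd_def by (rule N_expand[OF La Ld])
    finally show ?thesis by simp
  qed
  have I0: "I \<le> 0"
  proof (rule ccontr)
    assume "\<not> I \<le> 0"
    hence Ip: "I > 0" by simp
    show False
    proof (cases "Nd = 0")
      case True
      with key[of 1] Ip show False by simp
    next
      case False
      hence Ndp: "Nd > 0" using Nd0 by simp
      define t where "t = min 1 (I / Nd)"
      have t0: "0 < t" "t \<le> 1" unfolding t_def using Ip Ndp by auto
      have "t * Nd \<le> I" unfolding t_def using Ndp
        by (cases "1 \<le> I / Nd") (auto simp: min_def field_simps)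
      hence "t * (t * Nd) \<le> t * I" using t0 by (simp add: mult_left_mono)
      moreover have "2*t*I \<le> t\<^sup>2 * Nd" using key[OF t0] .
      ultimately have "t * I \<le> 0" by (simp add: power2_eq_square algebra_simps)
      moreover have "t * I > 0" using t0 Ip by simp
      ultimately show False by simp
    qed
  qed
  have "(\<integral>y. (x y - z y)\<^sup>2 \<partial>M) = (\<integral>y. (a y - 1 * d y)\<^sup>2 \<partial>M)"
    unfolding a_def d_def by (rule Bochner_Integration.integral_cong) simp_all
  also have "\<dots> = Na - 2*I + Nd"
    using N_expand[OF La Ld, of 1] unfolding Na_def I_def Nd_def by simp
  finally have "(\<integral>y. (x y - z y)\<^sup>2 \<partial>M) = Na - 2*I + Nd" .
  moreover have "(\<integral>y. (p y - z y)\<^sup>2 \<partial>M) = Nd" unfolding Nd_def d_def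
    by (rule Bochner_Integration.integral_cong) (auto simp: power2_eq_square algebra_simps)
  moreover have "(\<integral>y. (x y - p y)\<^sup>2 \<partial>M) = Na" unfolding Na_def a_def ..
  ultimately show ?thesis using I0 by simp
qed



definition chainsum :: "(real \<Rightarrow> real) \<Rightarrow> real \<Rightarrow> real set" where
  "chainsum r x = {s. \<exists>(n::nat) (t::nat \<Rightarrow> real). (\<forall>i\<le>n. t i \<in> {0..x}) \<and> (\<forall>i<n. t i \<le> t (Suc i))
      \<and> s = (\<Sum>i<n. \<bar>r (t (Suc i)) - r (t i)\<bar>)}"

definition Var :: "(real \<Rightarrow> real) \<Rightarrow> real \<Rightarrow> real" where
  "Var r x = Sup (chainsum r x)"

lemma chainsum_bdd:
  assumes "bounded_variation_on r 0 1" "x \<le> 1"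
  shows "bdd_above (chainsum r x)"
proof -
  obtain B where B: "\<forall>(n::nat) (t::nat \<Rightarrow> real).
        (\<forall>i\<le>n. t i \<in> {0..1}) \<and> (\<forall>i<n. t i \<le> t (Suc i)) \<longrightarrow>
        (\<Sum>i<n. \<bar>r (t (Suc i)) - r (t i)\<bar>) \<le> B"
    using assms(1) unfolding bounded_variation_on_def by blast
  show ?thesis unfolding bdd_above_def chainsum_def
  proof (intro exI[of _ B] ballI)
    fix s assume "s \<in> {s. \<exists>(n::nat) (t::nat \<Rightarrow> real). (\<forall>i\<le>n. t i \<in> {0..x}) \<and> (\<forall>i<n. t i \<le> t (Suc i))
      \<and> s = (\<Sum>i<n. \<bar>r (t (Suc i)) - r (t i)\<bar>)}"
    then obtain n t where h: "\<forall>i\<le>n. t i \<in> {0..x}" "\<forall>i<n. t i \<le> t (Suc i)"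
      "s = (\<Sum>i<n. \<bar>r (t (Suc i)) - r (t i)\<bar>)" by blast
    have "\<forall>i\<le>n. t i \<in> {0..1}" using h(1) assms(2) by auto
    from B[rule_format, OF conjI[OF this h(2)]] h(3) show "s \<le> B" by simp
  qed
qed

lemma chainsum_ne:
  assumes "0 \<le> x" shows "0 \<in> chainsum r x"
  unfolding chainsum_def using assms by (intro CollectI exI[of _ 0] exI[of _ "\<lambda>_. 0"]) auto

lemma Var_step:
  assumes bv: "bounded_variation_on r 0 1" and xy: "0 \<le> x" "x \<le> y" "y \<le> 1"
  shows "Var r x + \<bar>r y - r x\<bar> \<le> Var r y"
proof -
  have "Var r x \<le> Var r y - \<bar>r y - r x\<bar>"
    unfolding Var_def[of r x]
  proof (rule cSup_least)
    show "chainsum r x \<noteq> {}" using chainsum_ne[OF xy(1)] by blast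
    fix s assume "s \<in> chainsum r x"
    then obtain n t where h: "\<forall>i\<le>n. t i \<in> {0..x}" "\<forall>i<n. t i \<le> t (Suc i)"
      "s = (\<Sum>i<n. \<bar>r (t (Suc i)) - r (t i)\<bar>)" unfolding chainsum_def by blast
    define t' where "t' = (\<lambda>i. if i \<le> n then t i else if i = Suc n then x else y)"
    have c1: "\<forall>i\<le>Suc (Suc n). t' i \<in> {0..y}"
      using h(1) xy unfolding t'_def by auto
    have c2: "\<forall>i<Suc (Suc n). t' i \<le> t' (Suc i)"
    proof (intro allI impI)
      fix i assume "i < Suc (Suc n)"
      hence "i < n \<or> i = n \<or> i = Suc n" by auto
      thus "t' i \<le> t' (Suc i)"
      proof (elim disjE)
        assume "i < n" thus ?thesis using h(2) unfolding t'_def by auto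
      next
        assume "i = n" thus ?thesis using h(1) unfolding t'_def by auto
      next
        assume "i = Suc n" thus ?thesis using xy unfolding t'_def by auto
      qed
    qed
    have "(\<Sum>i<Suc (Suc n). \<bar>r (t' (Suc i)) - r (t' i)\<bar>)
        = (\<Sum>i<n. \<bar>r (t' (Suc i)) - r (t' i)\<bar>) + \<bar>r x - r (t n)\<bar> + \<bar>r y - r x\<bar>"
      unfolding t'_def by simp
    also have "(\<Sum>i<n. \<bar>r (t' (Suc i)) - r (t' i)\<bar>) = s"
      unfolding h(3) t'_def by (rule sum.cong) auto
    finally have eq: "(\<Sum>i<Suc (Suc n). \<bar>r (t' (Suc i)) - r (t' i)\<bar>) = s + \<bar>r x - r (t n)\<bar> + \<bar>r y - r x\<bar>" .
    have mem: "s + \<bar>r x - r (t n)\<bar> + \<bar>r y - r x\<bar> \<in> chainsum r y"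
      unfolding chainsum_def
      by (rule CollectI, rule exI[of _ "Suc (Suc n)"], rule exI[of _ t'], intro conjI c1 c2 eq[symmetric])
    have "s + \<bar>r x - r (t n)\<bar> + \<bar>r y - r x\<bar> \<le> Var r y"
      unfolding Var_def by (rule cSup_upper[OF mem chainsum_bdd[OF bv xy(3)]])
    thus "s \<le> Var r y - \<bar>r y - r x\<bar>" by simp
  qed
  thus ?thesis by simp
qed

lemma L2_bdd:
  assumes "finite_measure M" "f \<in> borel_measurable M" "\<And>x. \<bar>f x\<bar> \<le> B"
  shows "L2 M f"
proof -
  have "\<bar>(f x)\<^sup>2\<bar> \<le> B\<^sup>2" for x
  proof -
    have "\<bar>f x\<bar>\<^sup>2 \<le> B\<^sup>2" using assms(3)[of x] by (intro power_mono) auto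
    thus ?thesis by simp
  qed
  hence "integrable M (\<lambda>x. (f x)\<^sup>2)"
    using assms(2) by (intro finite_measure.integrable_const_bound[OF assms(1), where B="B\<^sup>2"]) auto
  thus ?thesis using assms unfolding L2_def by auto
qed

lemma Cplus_L2: "f \<in> Cplus M \<Longrightarrow> L2 M f" unfolding Cplus_def by auto

lemma Cminus_L2: "f \<in> Cminus M \<Longrightarrow> L2 M f"
  unfolding Cminus_def using L2_neg[of M "\<lambda>x. - f x"] Cplus_L2 by auto

lemma Cplus_conv:
  assumes "f \<in> Cplus M" "g \<in> Cplus M" "0 \<le> t" "t \<le> 1"
  shows "(\<lambda>y. f y + t*(g y - f y)) \<in> Cplus M"
proof -
  obtain vf where vf: "mono_on {0..1} vf" "AE x in M. f x = vf x" using assms(1) unfolding Cplus_def by auto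
  obtain vg where vg: "mono_on {0..1} vg" "AE x in M. g x = vg x" using assms(2) unfolding Cplus_def by auto
  have "L2 M (\<lambda>y. (1-t) * f y + t * g y)" using L2_lin[OF Cplus_L2[OF assms(1)] Cplus_L2[OF assms(2)]] .
  moreover have "(\<lambda>y. (1-t) * f y + t * g y) = (\<lambda>y. f y + t*(g y - f y))" by (rule ext) (simp add: algebra_simps)
  ultimately have L: "L2 M (\<lambda>y. f y + t*(g y - f y))" by simp
  have m: "mono_on {0..1} (\<lambda>y. vf y + t*(vg y - vf y))"
  proof (rule mono_onI)
    fix a c :: real assume ac: "a \<in> {0..1}" "c \<in> {0..1}" "a \<le> c"
    have 1: "vf a \<le> vf c" by (rule mono_onD[OF vf(1) ac])
    have 2: "vg a \<le> vg c" by (rule mono_onD[OF vg(1) ac])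
    have "(1-t) * vf a \<le> (1-t) * vf c" using 1 assms(4) by (intro mult_left_mono) auto
    moreover have "t * vg a \<le> t * vg c" using 2 assms(3) by (intro mult_left_mono) auto
    ultimately have "(1-t) * vf a + t * vg a \<le> (1-t) * vf c + t * vg c" by (rule add_mono)
    thus "vf a + t*(vg a - vf a) \<le> vf c + t*(vg c - vf c)" by (simp add: algebra_simps)
  qed
  have ae: "AE x in M. f x + t*(g x - f x) = vf x + t*(vg x - vf x)"
    using vf(2) vg(2) by eventually_elim simp
  show ?thesis unfolding Cplus_def
    by (rule CollectI, rule conjI, rule L, rule exI[of _ "\<lambda>y. vf y + t*(vg y - vf y)"], rule conjI, rule m, rule ae)
qed

lemma Cminus_conv:
  assumes "f \<in> Cminus M" "g \<in> Cminus M" "0 \<le> t" "t \<le> 1"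
  shows "(\<lambda>y. f y + t*(g y - f y)) \<in> Cminus M"
proof -
  have "(\<lambda>y. - f y + t*(- g y - - f y)) \<in> Cplus M"
    using Cplus_conv[of "\<lambda>y. - f y" M "\<lambda>y. - g y" t] assms unfolding Cminus_def by auto
  moreover have "(\<lambda>y. - f y + t*(- g y - - f y)) = (\<lambda>y. - (f y + t*(g y - f y)))"
    by (rule ext) (simp add: algebra_simps)
  ultimately show ?thesis unfolding Cminus_def by simp
qed

lemma mono_clamp_bound:
  fixes g :: "real \<Rightarrow> real"
  assumes "mono g" "\<And>x. g x = g (max 0 (min 1 x))"
  shows "\<bar>g x\<bar> \<le> \<bar>g 0\<bar> + \<bar>g 1\<bar>"
proof -
  have "g 0 \<le> g (max 0 (min 1 x))" "g (max 0 (min 1 x)) \<le> g 1"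
    using assms(1) by (auto intro: monoD)
  thus ?thesis using assms(2)[of x] by linarith
qed



theorem proposition3:
  fixes M :: "real measure" and r :: "real \<Rightarrow> real"
    and u b :: "nat \<Rightarrow> real \<Rightarrow> real"
  assumes prob: "prob_space M"
    and sets_M: "sets M = sets (restrict_space borel {0..1})"
    and nonatomic: "\<forall>x\<in>{0..1}. emeasure M {x} = 0"
    and rc: "\<forall>x\<in>{0..<1}. continuous (at_right x) r"
    and bv: "bounded_variation_on r 0 1"
    and b0: "b 0 = (\<lambda>x. 0)"
    and u_min: "\<And>k. u (Suc k) \<in> Cplus M \<and>
        (\<forall>v\<in>Cplus M. L2norm M (\<lambda>x. r x - b k x - u (Suc k) x)
                       \<le> L2norm M (\<lambda>x. r x - b k x - v x))"
    and b_min: "\<And>k. b (Suc k) \<in> Cminus M \<and>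
        (\<forall>w\<in>Cminus M. L2norm M (\<lambda>x. r x - u (Suc k) x - b (Suc k) x)
                        \<le> L2norm M (\<lambda>x. r x - u (Suc k) x - w x))"
  shows "(\<lambda>k. L2norm M (\<lambda>x. (u k x + b k x) - r x)) \<longlonglongrightarrow> 0"
proof -
  interpret prob_space M by (rule prob)
  have fm: "finite_measure M" by unfold_locales
  have spM: "space M = {0..1}" using sets_eq_imp_space_eq[OF sets_M] by simp
  have meas: "f \<in> borel_measurable M" if "f \<in> borel_measurable borel" for f :: "real \<Rightarrow> real"
    by (subst measurable_cong_sets[OF sets_M refl]) (rule measurable_restrict_space1[OF that])
  define cl where "cl = (\<lambda>x::real. max 0 (min 1 x))"
  have cl01: "0 \<le> cl x" "cl x \<le> 1" for x unfolding cl_def by auto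
  have clmono: "x \<le> y \<Longrightarrow> cl x \<le> cl y" for x y unfolding cl_def by auto
  have clid: "cl (cl x) = cl x" for x unfolding cl_def by auto
  have clin: "x \<in> {0..1} \<Longrightarrow> cl x = x" for x unfolding cl_def by auto
  define v where "v = (\<lambda>x. Var r (cl x))"
  define w where "w = (\<lambda>x. Var r (cl x) - r (cl x))"
  have mv: "mono v" unfolding v_def
  proof (rule monoI)
    fix x y :: real assume "x \<le> y"
    thus "Var r (cl x) \<le> Var r (cl y)" using Var_step[OF bv cl01(1) clmono cl01(2)] by fastforce
  qed
  have mw: "mono w" unfolding w_def
  proof (rule monoI)
    fix x y :: real assume "x \<le> y"
    hence "Var r (cl x) + \<bar>r (cl y) - r (cl x)\<bar> \<le> Var r (cl y)"
      using Var_step[OF bv cl01(1) clmono cl01(2)] by blast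
    thus "Var r (cl x) - r (cl x) \<le> Var r (cl y) - r (cl y)" by linarith
  qed
  have Lv: "L2 M v"
    by (rule L2_bdd[OF fm meas[OF borel_measurable_mono[OF mv]] mono_clamp_bound[OF mv]])
      (simp add: v_def clid[unfolded cl_def] cl_def)
  have Lw: "L2 M w"
    by (rule L2_bdd[OF fm meas[OF borel_measurable_mono[OF mw]] mono_clamp_bound[OF mw]])
      (simp add: w_def clid[unfolded cl_def] cl_def)
  have Lr: "L2 M r"
    by (rule L2_cong[OF _ L2_diff[OF Lv Lw]]) (simp add: v_def w_def clin spM)
  have vC: "v \<in> Cplus M" unfolding Cplus_def
    using Lv mv by (auto intro!: exI[of _ v] mono_onI dest: monoD)
  have zC: "(\<lambda>y. r y - v y) \<in> Cminus M" unfolding Cminus_def Cplus_def mem_Collect_eq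
  proof (rule conjI)
    show "L2 M (\<lambda>x. - (r x - v x))" using L2_neg[OF L2_diff[OF Lr Lv]] .
    show "\<exists>va. mono_on {0..1} va \<and> (AE x in M. - (r x - v x) = va x)"
    proof (rule exI[of _ w], rule conjI)
      show "mono_on {0..1} w" using mw by (auto intro!: mono_onI dest: monoD)
      show "AE x in M. - (r x - v x) = w x"
        by (rule AE_I2) (simp add: v_def w_def clin spM)
    qed
  qed
  have Lb: "L2 M (b k)" for k
  proof (cases k)
    case 0
    have "L2 M (\<lambda>x. 0)" by (rule L2_bdd[OF fm, of _ 0]) auto
    thus ?thesis using 0 b0 by simp
  next
    case (Suc j) thus ?thesis using b_min[of j] Cminus_L2 by blast
  qed
  define N where "N = (\<lambda>f::real\<Rightarrow>real. \<integral>y. (f y)\<^sup>2 \<partial>M)"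
  define D where "D = (\<lambda>k. N (\<lambda>y. b k y - (r y - v y)))"
  define E where "E = (\<lambda>k. N (\<lambda>y. r y - u k y - b k y))"
  have N0: "0 \<le> N f" for f unfolding N_def by simp
  have step: "D (Suc k) + E (Suc k) \<le> D k" for k
  proof -
    have s1: "N (\<lambda>y. u (Suc k) y - v y) + N (\<lambda>y. r y - b k y - u (Suc k) y) \<le> N (\<lambda>y. r y - b k y - v y)"
      unfolding N_def
      by (rule proj_ineq[where C="Cplus M"])
        (use u_min[of k] in \<open>auto intro: Cplus_L2 Cplus_conv L2_diff[OF Lr Lb] vC\<close>)
    have s2: "N (\<lambda>y. b (Suc k) y - (r y - v y)) + N (\<lambda>y. r y - u (Suc k) y - b (Suc k) y)
        \<le> N (\<lambda>y. r y - u (Suc k) y - (r y - v y))"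
      unfolding N_def
      by (rule proj_ineq[where C="Cminus M"])
        (use u_min[of k] b_min[of k] in \<open>auto intro: Cminus_L2 Cminus_conv L2_diff[OF Lr Cplus_L2] zC\<close>)
    have e1: "N (\<lambda>y. r y - b k y - v y) = D k" unfolding D_def N_def
      by (rule Bochner_Integration.integral_cong) (auto simp: power2_eq_square algebra_simps)
    have e2: "N (\<lambda>y. r y - u (Suc k) y - (r y - v y)) = N (\<lambda>y. u (Suc k) y - v y)" unfolding N_def
      by (rule Bochner_Integration.integral_cong) (auto simp: power2_eq_square algebra_simps)
    show ?thesis using s1 s2 e1 e2 N0[of "\<lambda>y. r y - b k y - u (Suc k) y"]
      unfolding D_def E_def by linarith
  qed
  have D0: "0 \<le> D k" for k unfolding D_def by (rule N0)
  have E0: "0 \<le> E k" for k unfolding E_def by (rule N0)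
  have dec: "decseq D"
    by (rule decseq_SucI) (use step E0 in smt)
  obtain L where L: "D \<longlonglongrightarrow> L" using decseq_convergent[OF dec, of 0] D0 by blast
  have "(\<lambda>k. D k - D (Suc k)) \<longlonglongrightarrow> L - L"
    by (intro tendsto_diff L LIMSEQ_Suc[OF L])
  hence dlim: "(\<lambda>k. D k - D (Suc k)) \<longlonglongrightarrow> 0" by simp
  have "(\<lambda>k. E (Suc k)) \<longlonglongrightarrow> 0"
  proof (rule tendsto_sandwich[OF _ _ tendsto_const dlim])
    show "\<forall>\<^sub>F k in sequentially. 0 \<le> E (Suc k)" using E0 by simp
    show "\<forall>\<^sub>F k in sequentially. E (Suc k) \<le> D k - D (Suc k)"
      using step by (simp add: algebra_simps)
  qed
  hence "E \<longlonglongrightarrow> 0" by (rule LIMSEQ_imp_Suc)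
  hence "(\<lambda>k. sqrt (E k)) \<longlonglongrightarrow> sqrt 0" by (rule tendsto_real_sqrt)
  moreover have "L2norm M (\<lambda>x. (u k x + b k x) - r x) = sqrt (E k)" for k
    unfolding L2norm_def E_def N_def
    by (rule arg_cong[where f=sqrt], rule Bochner_Integration.integral_cong)
      (auto simp: power2_eq_square algebra_simps)
  ultimately show ?thesis by simp
qed


end
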